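(* Let $t>0$, let $X\subset\mathbb{R}^d$ and $Y\subset\mathbb{R}^m$ be closed sets, and let $f:X\to Y$ be a $(1/t)$-bi-Hölder homeomorphism. Then for every $x_0\in X$ and every $T\in\mathrm{Tan}(X,x_0)$ there exist $T'\in\mathrm{Tan}(Y,f(x_0))$ and a $(1/t)$-bi-Hölder homeomorphism $g:T\to T'$.
   Context: A map $f:X\to Y$ is a $\beta$-bi-Hölder homeomorphism if it is a bijection and there is $C\ge1$ with $C^{-1}|x-y|^\beta\le|f(x)-f(y)|\le C|x-y|^\beta$ for all $x,y\in X$. With $\mathrm{exc}(A,B)=\sup_{a\in A}\inf_{b\in B}|a-b|$, closed sets $X_m\to X$ (Attouch–Wets) iff for every $r>0$, $\mathrm{exc}(X_m\cap\overline{B}(\mathbf{0},r),X)\to0$ and $\mathrm{exc}(X\cap\overline{B}(\mathbf{0},r),X_m)\to0$. A closed $T\ni\mathbf{0}$ belongs to $\mathrm{Tan}(X,x)$ if $r_j^{-1}(X-x)\to T$ for some $r_j\downarrow0$. *)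

theory Defs
  imports "HOL-Analysis.Analysis"
begin

definition bi_holder_homeo :: "real \<Rightarrow> ('a::metric_space \<Rightarrow> 'b::metric_space) \<Rightarrow> 'a set \<Rightarrow> 'b set \<Rightarrow> bool" where
  "bi_holder_homeo \<beta> f X Y \<longleftrightarrow> bij_betw f X Y \<and>
     (\<exists>C\<ge>1. \<forall>x\<in>X. \<forall>y\<in>X.
        dist x y powr \<beta> / C \<le> dist (f x) (f y) \<and> dist (f x) (f y) \<le> C * dist x y powr \<beta>)"

text \<open>Excess e(A,B) = sup over a in A of inf over b in B of |a-b|, with the convention
  sup of the empty set = 0 (and inf over empty B = +infinity).\<close>
definition exc :: "'a::metric_space set \<Rightarrow> 'a set \<Rightarrow> ereal" where
  "exc A B = (if A = {} then 0 else (SUP a\<in>A. INF b\<in>B. ereal (dist a b)))"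

definition attouch_wets :: "(nat \<Rightarrow> 'a::real_normed_vector set) \<Rightarrow> 'a set \<Rightarrow> bool" where
  "attouch_wets Xs X \<longleftrightarrow> (\<forall>r>0.
      ((\<lambda>m. exc (Xs m \<inter> cball 0 r) X) \<longlongrightarrow> 0) sequentially \<and>
      ((\<lambda>m. exc (X \<inter> cball 0 r) (Xs m)) \<longlongrightarrow> 0) sequentially)"

definition Tan :: "'a::real_normed_vector set \<Rightarrow> 'a \<Rightarrow> 'a set set" where
  "Tan X x = {T. closed T \<and> 0 \<in> T \<and>
      (\<exists>r::nat \<Rightarrow> real. (\<forall>j. r j > 0) \<and> decseq r \<and> r \<longlonglongrightarrow> 0 \<and>
         attouch_wets (\<lambda>j. (\<lambda>y. (1 / r j) *\<^sub>R (y - x)) ` X) T)}"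

end

theory Submission
  imports Defs "HOL-Library.Diagonal_Subsequence"
begin


lemma exc_nonneg: "0 \<le> exc A B"
proof (cases "A = {}")
  case True then show ?thesis by (simp add: exc_def)
next
  case False
  then obtain a where a: "a \<in> A" by blast
  have "0 \<le> (INF b\<in>B. ereal (dist a b))" by (rule INF_greatest) simp
  also have "\<dots> \<le> (SUP a\<in>A. INF b\<in>B. ereal (dist a b))" using a by (rule SUP_upper)
  finally show ?thesis using False by (simp add: exc_def)
qed

lemma exc_lt: assumes "exc A B < ereal e" "a \<in> A" shows "\<exists>b\<in>B. dist a b < e"
proof -
  have "A \<noteq> {}" using assms by auto
  then have "(SUP a\<in>A. INF b\<in>B. ereal (dist a b)) < ereal e" using assms by (simp add: exc_def)
  then have "(INF b\<in>B. ereal (dist a b)) < ereal e" using assms(2) by (rule SUP_lessD)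
  then show ?thesis by (auto simp: INF_less_iff)
qed

lemma exc_le: assumes "e > 0" "\<forall>a\<in>A. \<exists>b\<in>B. dist a b < e" shows "exc A B \<le> ereal e"
proof (cases "A = {}")
  case True then show ?thesis using assms by (simp add: exc_def)
next
  case False
  have "(SUP a\<in>A. INF b\<in>B. ereal (dist a b)) \<le> ereal e"
  proof (rule SUP_least)
    fix a assume "a \<in> A"
    then obtain b where "b \<in> B" "dist a b < e" using assms by auto
    then show "(INF b\<in>B. ereal (dist a b)) \<le> ereal e"
      by (intro INF_lower2[of b]) auto
  qed
  then show ?thesis using False by (simp add: exc_def)
qed

lemma exc_tendsto_iff:
  "((\<lambda>m. exc (A m) (B m)) \<longlongrightarrow> 0) sequentially \<longleftrightarrow>
   (\<forall>e>0. eventually (\<lambda>m. \<forall>a\<in>A m. \<exists>b\<in>B m. dist a b < e) sequentially)"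
proof
  assume L: "((\<lambda>m. exc (A m) (B m)) \<longlongrightarrow> 0) sequentially"
  show "\<forall>e>0. eventually (\<lambda>m. \<forall>a\<in>A m. \<exists>b\<in>B m. dist a b < e) sequentially"
  proof (intro allI impI)
    fix e :: real assume "e > 0"
    then have "eventually (\<lambda>m. exc (A m) (B m) < ereal e) sequentially"
      using order_tendstoD(2)[OF L] by simp
    then show "eventually (\<lambda>m. \<forall>a\<in>A m. \<exists>b\<in>B m. dist a b < e) sequentially"
      by eventually_elim (auto dest: exc_lt)
  qed
next
  assume R: "\<forall>e>0. eventually (\<lambda>m. \<forall>a\<in>A m. \<exists>b\<in>B m. dist a b < e) sequentially"
  show "((\<lambda>m. exc (A m) (B m)) \<longlongrightarrow> 0) sequentially"
  proof (rule order_tendstoI)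
    fix y :: ereal assume "y < 0"
    then show "eventually (\<lambda>m. y < exc (A m) (B m)) sequentially"
      by (intro always_eventually allI) (rule less_le_trans[OF _ exc_nonneg])
  next
    fix y :: ereal assume "0 < y"
    then obtain z where z: "0 < ereal z" "ereal z < y" using ereal_dense2 by blast
    then have "z > 0" by simp
    with R have "eventually (\<lambda>m. \<forall>a\<in>A m. \<exists>b\<in>B m. dist a b < z) sequentially" by blast
    then show "eventually (\<lambda>m. exc (A m) (B m) < y) sequentially"
    proof eventually_elim
      case (elim m)
      then have "exc (A m) (B m) \<le> ereal z" using \<open>z > 0\<close> by (intro exc_le)
      then show ?case using z by simp
    qed
  qed
qed

definition aw2 :: "(nat \<Rightarrow> 'a::real_normed_vector set) \<Rightarrow> 'a set \<Rightarrow> bool" where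
  "aw2 Xs X \<longleftrightarrow> (\<forall>r>0. \<forall>e>0.
      eventually (\<lambda>m. \<forall>a\<in>Xs m \<inter> cball 0 r. \<exists>b\<in>X. dist a b < e) sequentially \<and>
      eventually (\<lambda>m. \<forall>a\<in>X \<inter> cball 0 r. \<exists>b\<in>Xs m. dist a b < e) sequentially)"

lemma attouch_wets_aw2: "attouch_wets Xs X \<longleftrightarrow> aw2 Xs X"
proof -
  have 1: "((\<lambda>m. exc (Xs m \<inter> cball 0 r) X) \<longlongrightarrow> 0) sequentially \<longleftrightarrow>
     (\<forall>e>0. eventually (\<lambda>m. \<forall>a\<in>Xs m \<inter> cball 0 r. \<exists>b\<in>X. dist a b < e) sequentially)" for r
    using exc_tendsto_iff[of "\<lambda>m. Xs m \<inter> cball 0 r" "\<lambda>m. X"] by simp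
  have 2: "((\<lambda>m. exc (X \<inter> cball 0 r) (Xs m)) \<longlongrightarrow> 0) sequentially \<longleftrightarrow>
     (\<forall>e>0. eventually (\<lambda>m. \<forall>a\<in>X \<inter> cball 0 r. \<exists>b\<in>Xs m. dist a b < e) sequentially)" for r
    using exc_tendsto_iff[of "\<lambda>m. X \<inter> cball 0 r" "\<lambda>m. Xs m"] by simp
  show ?thesis unfolding attouch_wets_def aw2_def 1 2 by auto
qed

lemma sel_seq:
  fixes p :: "nat \<Rightarrow> 'a::metric_space"
  assumes "\<forall>e>0. eventually (\<lambda>j. \<exists>b\<in>S j. dist (p j) b < e) sequentially"
    and "\<And>j. S j \<noteq> {}"
  shows "\<exists>a. (\<forall>j. a j \<in> S j) \<and> (\<lambda>j. dist (p j) (a j)) \<longlonglongrightarrow> 0"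
proof -
  have ex: "\<exists>b\<in>S j. dist (p j) b < infdist (p j) (S j) + 1 / real (Suc j)" for j
  proof -
    have "infdist (p j) (S j) < infdist (p j) (S j) + 1 / real (Suc j)" by simp
    then have "(INF b\<in>S j. dist (p j) b) < infdist (p j) (S j) + 1 / real (Suc j)"
      using assms(2) by (simp add: infdist_notempty)
    then show ?thesis using assms(2)[of j] by (subst (asm) cInf_less_iff) auto
  qed
  then have "\<forall>j. \<exists>b. b \<in> S j \<and> dist (p j) b < infdist (p j) (S j) + 1 / real (Suc j)"
    by blast
  from choice[OF this] obtain a where a0: "\<forall>j. a j \<in> S j \<and> dist (p j) (a j) < infdist (p j) (S j) + 1 / real (Suc j)"
    by blast
  then have a: "\<And>j. a j \<in> S j"
    "\<And>j. dist (p j) (a j) < infdist (p j) (S j) + 1 / real (Suc j)" by auto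
  have i0: "(\<lambda>j. infdist (p j) (S j)) \<longlonglongrightarrow> 0"
  proof (rule order_tendstoI)
    fix y :: real assume "y < 0" then show "eventually (\<lambda>j. y < infdist (p j) (S j)) sequentially"
      by (intro always_eventually allI) (rule less_le_trans[OF _ infdist_nonneg])
  next
    fix y :: real assume "0 < y"
    with assms(1) have "eventually (\<lambda>j. \<exists>b\<in>S j. dist (p j) b < y) sequentially" by blast
    then show "eventually (\<lambda>j. infdist (p j) (S j) < y) sequentially"
      by eventually_elim (meson infdist_le le_less_trans)
  qed
  have "(\<lambda>j. infdist (p j) (S j) + 1 / real (Suc j)) \<longlonglongrightarrow> 0 + 0"
    using tendsto_add[OF i0 LIMSEQ_inverse_real_of_nat] by (simp add: inverse_eq_divide)
  then have h: "(\<lambda>j. infdist (p j) (S j) + 1 / real (Suc j)) \<longlonglongrightarrow> 0" by simp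
  have "(\<lambda>j. dist (p j) (a j)) \<longlonglongrightarrow> 0"
  proof (rule tendsto_sandwich[OF _ _ tendsto_const h])
    show "\<forall>\<^sub>F n in sequentially. 0 \<le> dist (p n) (a n)" by simp
    show "\<forall>\<^sub>F n in sequentially. dist (p n) (a n) \<le> infdist (p n) (S n) + 1 / real (Suc n)"
      using a(2) by (intro always_eventually allI less_imp_le) 
  qed
  with a show ?thesis by blast
qed



lemma powr_le_inv:
  fixes x K \<beta> :: real
  assumes "0 \<le> x" "0 < \<beta>" "x powr \<beta> \<le> K"
  shows "x \<le> K powr (1 / \<beta>)"
proof -
  have "x = (x powr \<beta>) powr (1 / \<beta>)" using assms by (simp add: powr_powr powr_one)
  also have "\<dots> \<le> K powr (1 / \<beta>)" using assms by (intro powr_mono2) auto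
  finally show ?thesis .
qed

lemma small_powr:
  fixes e C \<beta> :: real
  assumes "0 < e" "0 < C" "0 < \<beta>"
  shows "\<exists>\<delta>>0. \<forall>d. 0 \<le> d \<longrightarrow> d < \<delta> \<longrightarrow> C * d powr \<beta> < e"
proof (intro exI conjI allI impI)
  show "0 < (e / C) powr (1 / \<beta>)" using assms by simp
  fix d :: real assume d: "0 \<le> d" "d < (e / C) powr (1 / \<beta>)"
  then have "d powr \<beta> < ((e / C) powr (1 / \<beta>)) powr \<beta>"
    using assms by (intro powr_less_mono2) auto
  also have "\<dots> = e / C" using assms by (simp add: powr_powr powr_one)
  finally show "C * d powr \<beta> < e" using assms by (simp add: field_simps)
qed

lemma dist_transfer:
  fixes x y :: "nat \<Rightarrow> 'a::metric_space"
  assumes "(\<lambda>j. dist (x j) (y j)) \<longlonglongrightarrow> 0" "y \<longlonglongrightarrow> l"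
  shows "x \<longlonglongrightarrow> l"
proof (rule metric_LIMSEQ_I)
  fix e :: real assume "0 < e"
  then have e2: "e / 2 > 0" by simp
  have "eventually (\<lambda>j. dist (x j) (y j) < e / 2) sequentially"
    using order_tendstoD(2)[OF assms(1) e2] by simp
  moreover have "eventually (\<lambda>j. dist (y j) l < e / 2) sequentially"
    using assms(2) e2 unfolding tendsto_iff by blast
  ultimately have "eventually (\<lambda>j. dist (x j) l < e) sequentially"
  proof eventually_elim
    case (elim j)
    have "dist (x j) l \<le> dist (x j) (y j) + dist (y j) l" by (rule dist_triangle)
    then show ?case using elim by simp
  qed
  then show "\<exists>no. \<forall>n\<ge>no. dist (x n) l < e" by (simp add: eventually_sequentially)
qed



lemma main_limit:
  fixes Xs :: "nat \<Rightarrow> 'a::euclidean_space set" and Ys :: "nat \<Rightarrow> 'b::euclidean_space set"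
    and F :: "nat \<Rightarrow> 'a \<Rightarrow> 'b" and T :: "'a set" and \<beta> C :: real
  assumes aw: "aw2 Xs T" and clT: "closed T" and T0: "0 \<in> T"
    and X0: "\<And>j. 0 \<in> Xs j" and F0: "\<And>j. F j 0 = 0" and FY: "\<And>j. F j ` Xs j = Ys j"
    and b: "\<beta> > 0" and C: "C \<ge> 1"
    and lo: "\<And>j u v. u \<in> Xs j \<Longrightarrow> v \<in> Xs j \<Longrightarrow> dist u v powr \<beta> / C \<le> dist (F j u) (F j v)"
    and hi: "\<And>j u v. u \<in> Xs j \<Longrightarrow> v \<in> Xs j \<Longrightarrow> dist (F j u) (F j v) \<le> C * dist u v powr \<beta>"
  shows "\<exists>\<phi> g. strict_mono \<phi> \<and> closed (g ` T) \<and> 0 \<in> g ` T \<and> aw2 (\<lambda>j. Ys (\<phi> j)) (g ` T)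
            \<and> bi_holder_homeo \<beta> g T (g ` T)"
proof -
  have Cpos: "C > 0" using C by simp
  have aw1: "\<And>r e. r > 0 \<Longrightarrow> e > 0 \<Longrightarrow>
      eventually (\<lambda>m. \<forall>a\<in>Xs m \<inter> cball 0 r. \<exists>b\<in>T. dist a b < e) sequentially"
    and aw2': "\<And>r e. r > 0 \<Longrightarrow> e > 0 \<Longrightarrow>
      eventually (\<lambda>m. \<forall>a\<in>T \<inter> cball 0 r. \<exists>b\<in>Xs m. dist a b < e) sequentially"
    using aw unfolding aw2_def by blast+
  have normF: "norm u powr \<beta> \<le> C * norm (F j u)" if "u \<in> Xs j" for j u
    using lo[OF that X0[of j]] Cpos by (simp add: F0 field_simps)
  have normF2: "norm (F j u) \<le> C * norm u powr \<beta>" if "u \<in> Xs j" for j u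
    using hi[OF that X0[of j]] by (simp add: F0)
  have "\<exists>a. (\<forall>j. a j \<in> Xs j) \<and> a \<longlonglongrightarrow> p" if "p \<in> T" for p
  proof -
    have ev: "\<forall>e>0. eventually (\<lambda>j. \<exists>b\<in>Xs j. dist ((\<lambda>_. p) j) b < e) sequentially"
    proof (intro allI impI)
      fix e :: real assume "e > 0"
      have "norm p + 1 > 0" by (smt (verit) norm_ge_zero)
      from aw2'[OF this \<open>e > 0\<close>]
      show "eventually (\<lambda>j. \<exists>b\<in>Xs j. dist ((\<lambda>_. p) j) b < e) sequentially"
      proof eventually_elim
        case (elim j)
        have "p \<in> T \<inter> cball 0 (norm p + 1)" using that by (simp add: dist_norm)
        then show ?case using elim by blast
      qed
    qed
    have ne: "\<And>j. Xs j \<noteq> {}" using X0 by blast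
    obtain a where a1: "\<forall>j. a j \<in> Xs j" and a2: "(\<lambda>j. dist p (a j)) \<longlonglongrightarrow> 0"
      using sel_seq[OF ev ne] by blast
    have "a \<longlonglongrightarrow> p" using a2 by (subst tendsto_dist_iff) (simp only: dist_commute)
    then show ?thesis using a1 by blast
  qed
  then have "\<forall>p\<in>T. \<exists>a. (\<forall>j. a j \<in> Xs j) \<and> a \<longlonglongrightarrow> p" by blast
  from bchoice[OF this] obtain a where a0: "\<forall>p\<in>T. (\<forall>j. a p j \<in> Xs j) \<and> a p \<longlonglongrightarrow> p"
    by blast
  then have a: "\<And>p j. p \<in> T \<Longrightarrow> a p j \<in> Xs j" "\<And>p. p \<in> T \<Longrightarrow> a p \<longlonglongrightarrow> p"
    by auto
  obtain D where D: "countable D" "D \<subseteq> T" "T \<subseteq> closure D" using separable by blast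
  have "D \<noteq> {}" using D T0 by auto
  define q where "q = from_nat_into D"
  have rq: "range q = D" using D \<open>D \<noteq> {}\<close> by (simp add: q_def)
  have qT: "q n \<in> T" for n using rq D by auto
  define Z where "Z n j = F j (a (q n) j)" for n j
  have Zb: "\<exists>B. \<forall>j. Z n j \<in> cball 0 B" for n
  proof -
    have "convergent (a (q n))" using a(2)[OF qT] by (auto simp: convergent_def)
    then have "Bseq (a (q n))" by (rule convergent_imp_Bseq)
    then obtain K where K: "K > 0" "\<And>j. norm (a (q n) j) \<le> K" by (auto elim: BseqE)
    have "norm (Z n j) \<le> C * K powr \<beta>" for j
    proof -
      have "norm (Z n j) \<le> C * norm (a (q n) j) powr \<beta>"
        unfolding Z_def by (rule normF2[OF a(1)[OF qT]])
      also have "\<dots> \<le> C * K powr \<beta>"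
        using K Cpos b by (intro mult_left_mono powr_mono2) auto
      finally show ?thesis .
    qed
    then show ?thesis by auto
  qed
  interpret S: subseqs "\<lambda>n s. convergent (Z n \<circ> s)"
  proof
    fix n and s :: "nat \<Rightarrow> nat" assume "strict_mono s"
    obtain B where B: "\<And>j. Z n j \<in> cball 0 B" using Zb by blast
    have sc: "seq_compact (cball (0::'b) B)" by (intro compact_imp_seq_compact compact_cball)
    have "\<forall>j. (Z n \<circ> s) j \<in> cball 0 B" using B by simp
    from seq_compactE[OF sc this] obtain l r where "strict_mono (r :: nat \<Rightarrow> nat)" "((Z n \<circ> s) \<circ> r) \<longlonglongrightarrow> l"
      by blast
    then show "\<exists>r'. strict_mono r' \<and> convergent (Z n \<circ> (s \<circ> r'))"
      by (auto simp: convergent_def o_assoc)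
  qed
  define \<phi> where "\<phi> = S.diagseq"
  have \<phi>: "strict_mono \<phi>" unfolding \<phi>_def by (rule S.subseq_diagseq)
  have Zc: "convergent (Z n \<circ> \<phi>)" for n
  proof -
    have "convergent (Z n \<circ> (S.diagseq \<circ> (+) (Suc n)))"
      by (rule S.diagseq_holds) (auto simp: convergent_def o_assoc intro: LIMSEQ_subseq_LIMSEQ)
    then obtain l where "(\<lambda>j. (Z n \<circ> \<phi>) (j + Suc n)) \<longlonglongrightarrow> l"
      by (auto simp: convergent_def \<phi>_def o_def add.commute)
    then have "(Z n \<circ> \<phi>) \<longlonglongrightarrow> l" by (rule LIMSEQ_offset)
    then show ?thesis by (auto simp: convergent_def)
  qed
  define L where "L p j = F (\<phi> j) (a p (\<phi> j))" for p j
  have Lc: "convergent (L p)" if pT: "p \<in> T" for p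
  proof -
    have "Cauchy (L p)"
      unfolding Cauchy_def
    proof (intro allI impI)
      fix e :: real assume "e > 0"
      then have "e / 3 > 0" by simp
      from small_powr[OF this Cpos b] obtain \<delta> where \<delta>: "\<delta> > 0"
        "\<And>d. 0 \<le> d \<Longrightarrow> d < \<delta> \<Longrightarrow> C * d powr \<beta> < e / 3" by blast
      have "\<delta> / 3 > 0" using \<delta> by simp
      from pT D have "p \<in> closure D" by auto
      then obtain y where "y \<in> D" "dist y p < \<delta> / 3"
        using \<open>\<delta> / 3 > 0\<close> unfolding closure_approachable by blast
      then obtain n where n: "dist (q n) p < \<delta> / 3" using rq by auto
      have "(a p \<circ> \<phi>) \<longlonglongrightarrow> p" by (rule LIMSEQ_subseq_LIMSEQ[OF a(2)[OF pT] \<phi>])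
      then have ev1: "eventually (\<lambda>j. dist (a p (\<phi> j)) p < \<delta> / 3) sequentially"
        using \<open>\<delta> / 3 > 0\<close> unfolding tendsto_iff comp_def by blast
      have "(a (q n) \<circ> \<phi>) \<longlonglongrightarrow> q n" by (rule LIMSEQ_subseq_LIMSEQ[OF a(2)[OF qT] \<phi>])
      then have ev2: "eventually (\<lambda>j. dist (a (q n) (\<phi> j)) (q n) < \<delta> / 3) sequentially"
        using \<open>\<delta> / 3 > 0\<close> unfolding tendsto_iff comp_def by blast
      have "eventually (\<lambda>j. dist (L p j) (Z n (\<phi> j)) < e / 3) sequentially"
        using ev1 ev2
      proof eventually_elim
        case (elim j)
        have "dist (a p (\<phi> j)) (a (q n) (\<phi> j)) \<le>
            dist (a p (\<phi> j)) p + dist p (q n) + dist (a (q n) (\<phi> j)) (q n)"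
          using dist_triangle[of "a p (\<phi> j)" "a (q n) (\<phi> j)" p]
            dist_triangle[of p "a (q n) (\<phi> j)" "q n"]
            dist_commute[of "a (q n) (\<phi> j)" "q n"] by linarith
        also have "\<dots> < \<delta>" using elim n by (simp add: dist_commute)
        finally have d: "dist (a p (\<phi> j)) (a (q n) (\<phi> j)) < \<delta>" .
        have "dist (L p j) (Z n (\<phi> j)) \<le> C * dist (a p (\<phi> j)) (a (q n) (\<phi> j)) powr \<beta>"
          unfolding L_def Z_def by (rule hi[OF a(1)[OF pT] a(1)[OF qT]])
        also have "\<dots> < e / 3" by (rule \<delta>(2)[OF _ d]) simp
        finally show ?case .
      qed
      then obtain N1 where N1: "\<And>j. j \<ge> N1 \<Longrightarrow> dist (L p j) (Z n (\<phi> j)) < e / 3"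
        by (auto simp: eventually_sequentially)
      have "Cauchy (Z n \<circ> \<phi>)" using Zc[of n] by (simp add: Cauchy_convergent_iff)
      then obtain M where M0: "\<forall>i\<ge>M. \<forall>j\<ge>M. dist ((Z n \<circ> \<phi>) i) ((Z n \<circ> \<phi>) j) < e / 3"
        using \<open>e / 3 > 0\<close> unfolding Cauchy_def by blast
      have M: "\<And>i j. i \<ge> M \<Longrightarrow> j \<ge> M \<Longrightarrow> dist (Z n (\<phi> i)) (Z n (\<phi> j)) < e / 3"
        using M0 by simp
      show "\<exists>M. \<forall>i\<ge>M. \<forall>j\<ge>M. dist (L p i) (L p j) < e"
      proof (intro exI allI impI)
        fix i j assume ij: "max N1 M \<le> i" "max N1 M \<le> j"
        have "dist (L p i) (L p j) \<le> dist (L p i) (Z n (\<phi> i)) + dist (Z n (\<phi> i)) (Z n (\<phi> j))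
              + dist (L p j) (Z n (\<phi> j))"
          using dist_triangle[of "L p i" "L p j" "Z n (\<phi> i)"]
            dist_triangle[of "Z n (\<phi> i)" "L p j" "Z n (\<phi> j)"]
            dist_commute[of "L p j" "Z n (\<phi> j)"] by linarith
        also have "\<dots> < e / 3 + e / 3 + e / 3"
          using N1[of i] N1[of j] M[of i j] ij by (intro add_strict_mono) auto
        finally show "dist (L p i) (L p j) < e" by simp
      qed
    qed
    then show ?thesis by (simp add: Cauchy_convergent_iff)
  qed
  define g where "g p = lim (L p)" for p
  have Lg: "L p \<longlonglongrightarrow> g p" if "p \<in> T" for p
    using Lc[OF that] unfolding g_def by (simp add: convergent_LIMSEQ_iff)
  have P: "(\<lambda>j. F (\<phi> (k j)) (u j)) \<longlonglongrightarrow> g p"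
    if k: "strict_mono k" and u: "\<And>j. u j \<in> Xs (\<phi> (k j))" and up: "u \<longlonglongrightarrow> p" and pT: "p \<in> T"
    for k u p
  proof (rule dist_transfer)
    show "(L p \<circ> k) \<longlonglongrightarrow> g p" by (rule LIMSEQ_subseq_LIMSEQ[OF Lg[OF pT] k])
    have "(a p \<circ> (\<phi> \<circ> k)) \<longlonglongrightarrow> p"
      by (rule LIMSEQ_subseq_LIMSEQ[OF a(2)[OF pT]]) (use \<phi> k in \<open>simp add: strict_mono_o\<close>)
    then have "(\<lambda>j. dist (u j) (a p (\<phi> (k j)))) \<longlonglongrightarrow> dist p p"
      using up by (intro tendsto_dist) (auto simp: o_def)
    then have "(\<lambda>j. C * dist (u j) (a p (\<phi> (k j))) powr \<beta>) \<longlonglongrightarrow> C * 0 powr \<beta>"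
      using b by (intro tendsto_intros) auto
    then have h: "(\<lambda>j. C * dist (u j) (a p (\<phi> (k j))) powr \<beta>) \<longlonglongrightarrow> 0" by simp
    show "(\<lambda>j. dist (F (\<phi> (k j)) (u j)) ((L p \<circ> k) j)) \<longlonglongrightarrow> 0"
    proof (rule tendsto_sandwich[OF _ _ tendsto_const h])
      show "\<forall>\<^sub>F n in sequentially. 0 \<le> dist (F (\<phi> (k n)) (u n)) ((L p \<circ> k) n)" by simp
      show "\<forall>\<^sub>F n in sequentially. dist (F (\<phi> (k n)) (u n)) ((L p \<circ> k) n)
            \<le> C * dist (u n) (a p (\<phi> (k n))) powr \<beta>"
        unfolding L_def o_def by (intro always_eventually allI hi u a(1)[OF pT])
    qed
  qed
  have g0: "g 0 = 0"
  proof -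
    have "(\<lambda>j. F (\<phi> (id j)) ((\<lambda>_. 0) j)) \<longlonglongrightarrow> g 0"
      by (rule P) (auto simp: X0 T0 strict_mono_def)
    then have "(\<lambda>j. 0::'b) \<longlonglongrightarrow> g 0" by (simp add: F0)
    then show ?thesis using LIMSEQ_unique tendsto_const by metis
  qed
  have gb: "dist p p' powr \<beta> / C \<le> dist (g p) (g p') \<and> dist (g p) (g p') \<le> C * dist p p' powr \<beta>"
    if pT: "p \<in> T" and pT': "p' \<in> T" for p p'
  proof -
    have u: "(\<lambda>j. F (\<phi> (id j)) (a p (\<phi> j))) \<longlonglongrightarrow> g p"
      by (rule P) (auto intro: a(1)[OF pT] LIMSEQ_subseq_LIMSEQ[OF a(2)[OF pT] \<phi>, unfolded o_def] pT simp: strict_mono_def)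
    have v: "(\<lambda>j. F (\<phi> (id j)) (a p' (\<phi> j))) \<longlonglongrightarrow> g p'"
      by (rule P) (auto intro: a(1)[OF pT'] LIMSEQ_subseq_LIMSEQ[OF a(2)[OF pT'] \<phi>, unfolded o_def] pT' simp: strict_mono_def)
    have dF: "(\<lambda>j. dist (F (\<phi> j) (a p (\<phi> j))) (F (\<phi> j) (a p' (\<phi> j)))) \<longlonglongrightarrow> dist (g p) (g p')"
      using tendsto_dist[OF u v] by simp
    have "(\<lambda>j. dist (a p (\<phi> j)) (a p' (\<phi> j))) \<longlonglongrightarrow> dist p p'"
      by (intro tendsto_dist LIMSEQ_subseq_LIMSEQ[OF a(2)[OF pT] \<phi>, unfolded o_def]
          LIMSEQ_subseq_LIMSEQ[OF a(2)[OF pT'] \<phi>, unfolded o_def])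
    then have dP: "(\<lambda>j. dist (a p (\<phi> j)) (a p' (\<phi> j)) powr \<beta>) \<longlonglongrightarrow> dist p p' powr \<beta>"
      by (rule tendsto_powr'[OF _ tendsto_const]) (use b in auto)
    have "dist p p' powr \<beta> / C \<le> dist (g p) (g p')"
    proof (rule tendsto_le[OF _ dF])
      show "(\<lambda>j. dist (a p (\<phi> j)) (a p' (\<phi> j)) powr \<beta> / C) \<longlonglongrightarrow> dist p p' powr \<beta> / C"
        by (rule tendsto_divide[OF dP tendsto_const]) (use Cpos in simp)
      show "\<forall>\<^sub>F j in sequentially. dist (a p (\<phi> j)) (a p' (\<phi> j)) powr \<beta> / C
          \<le> dist (F (\<phi> j) (a p (\<phi> j))) (F (\<phi> j) (a p' (\<phi> j)))"
        by (intro always_eventually allI lo a(1) pT pT')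
    qed simp
    moreover have "dist (g p) (g p') \<le> C * dist p p' powr \<beta>"
    proof (rule tendsto_le[OF _ _ dF])
      show "(\<lambda>j. C * dist (a p (\<phi> j)) (a p' (\<phi> j)) powr \<beta>) \<longlonglongrightarrow> C * dist p p' powr \<beta>"
        by (rule tendsto_mult_left[OF dP])
      show "\<forall>\<^sub>F j in sequentially. dist (F (\<phi> j) (a p (\<phi> j))) (F (\<phi> j) (a p' (\<phi> j)))
          \<le> C * dist (a p (\<phi> j)) (a p' (\<phi> j)) powr \<beta>"
        by (intro always_eventually allI hi a(1) pT pT')
    qed simp
    ultimately show ?thesis by blast
  qed
  have inj: "inj_on g T"
  proof (rule inj_onI)
    fix p p' assume "p \<in> T" "p' \<in> T" "g p = g p'"
    with gb[of p p'] have "dist p p' powr \<beta> / C \<le> 0" by simp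
    then have "dist p p' powr \<beta> \<le> 0" using Cpos by (simp add: divide_le_0_iff)
    then have "\<not> (0 < dist p p' powr \<beta>)" by simp
    then show "p = p'" by simp
  qed
  have bh: "bi_holder_homeo \<beta> g T (g ` T)"
    unfolding bi_holder_homeo_def
    using inj_on_imp_bij_betw[OF inj] C gb by blast
  have normg: "norm p powr \<beta> \<le> C * norm (g p)" if "p \<in> T" for p
    using gb[OF that T0] Cpos by (simp add: g0 field_simps)
  have gcont: "(\<lambda>n. g (pp n)) \<longlonglongrightarrow> g l" if "\<And>n. pp n \<in> T" "l \<in> T" "pp \<longlonglongrightarrow> l" for pp l
  proof (rule dist_transfer[OF _ tendsto_const])
    have d0: "(\<lambda>n. dist (pp n) l) \<longlonglongrightarrow> 0" using that(3) tendsto_dist_iff by blast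
    have "(\<lambda>n. dist (pp n) l powr \<beta>) \<longlonglongrightarrow> 0 powr \<beta>"
      by (rule tendsto_powr'[OF d0 tendsto_const]) (use b in auto)
    then have "(\<lambda>n. C * dist (pp n) l powr \<beta>) \<longlonglongrightarrow> C * 0 powr \<beta>"
      by (rule tendsto_mult_left)
    then have h: "(\<lambda>n. C * dist (pp n) l powr \<beta>) \<longlonglongrightarrow> 0" by simp
    show "(\<lambda>n. dist (g (pp n)) (g l)) \<longlonglongrightarrow> 0"
      by (rule tendsto_sandwich[OF _ _ tendsto_const h])
         (auto intro!: always_eventually conjunct2[OF gb] that)
  qed
  have clg: "closed (g ` T)"
    unfolding closed_sequential_limits
  proof (intro allI impI)
    fix x l assume xl: "(\<forall>n. x n \<in> g ` T) \<and> x \<longlonglongrightarrow> l"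
    then have "\<forall>n. \<exists>p. p \<in> T \<and> x n = g p" by blast
    from choice[OF this] obtain pp where pp: "\<And>n. pp n \<in> T" "\<And>n. x n = g (pp n)" by blast
    have "Cauchy pp"
      unfolding Cauchy_def
    proof (intro allI impI)
      fix e :: real assume "e > 0"
      have "Cauchy x" using xl by (intro LIMSEQ_imp_Cauchy) auto
      moreover have "e powr \<beta> / C > 0" using \<open>e > 0\<close> Cpos by simp
      ultimately obtain M where M: "\<forall>m\<ge>M. \<forall>n\<ge>M. dist (x m) (x n) < e powr \<beta> / C"
        unfolding Cauchy_def by blast
      show "\<exists>M. \<forall>m\<ge>M. \<forall>n\<ge>M. dist (pp m) (pp n) < e"
      proof (intro exI allI impI)
        fix m n assume "M \<le> m" "M \<le> n"
        with M have "dist (g (pp m)) (g (pp n)) < e powr \<beta> / C" by (simp add: pp)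
        with gb[OF pp(1) pp(1), of m n] have "dist (pp m) (pp n) powr \<beta> / C < e powr \<beta> / C"
          by linarith
        then have lt: "dist (pp m) (pp n) powr \<beta> < e powr \<beta>" using Cpos by (simp add: divide_less_cancel)
        show "dist (pp m) (pp n) < e"
        proof (rule ccontr)
          assume "\<not> dist (pp m) (pp n) < e"
          then have "e powr \<beta> \<le> dist (pp m) (pp n) powr \<beta>"
            using b \<open>e > 0\<close> by (intro powr_mono2) auto
          with lt show False by simp
        qed
      qed
    qed
    then obtain p where p: "pp \<longlonglongrightarrow> p" by (auto simp: Cauchy_convergent_iff convergent_def)
    have pT: "p \<in> T" using clT pp(1) p closed_sequentially by blast
    have "(\<lambda>n. g (pp n)) \<longlonglongrightarrow> g p" by (rule gcont[OF pp(1) pT p])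
    then have "x \<longlonglongrightarrow> g p" by (simp add: pp(2)[symmetric])
    then have "l = g p" using xl LIMSEQ_unique by blast
    then show "l \<in> g ` T" using pT by blast
  qed
  have "0 \<in> g ` T" using T0 g0 by (metis imageI)
  have awY: "aw2 (\<lambda>j. Ys (\<phi> j)) (g ` T)"
    unfolding aw2_def
  proof (intro allI impI conjI)
    fix R e :: real assume R: "R > 0" and e: "e > 0"
    define R1 where "R1 = (C * R) powr (1 / \<beta>) + 1"
    have R1: "R1 > 0" unfolding R1_def using powr_ge_zero[of "C * R" "1 / \<beta>"] by linarith
    have normb: "norm u \<le> R1" if "norm u powr \<beta> \<le> C * norm w" "norm w \<le> R" for u :: 'a and w :: 'b
    proof -
      have "norm u powr \<beta> \<le> C * R" using that(1) mult_left_mono[OF that(2), of C] Cpos by linarith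
      then have "norm u \<le> (C * R) powr (1 / \<beta>)" using b by (intro powr_le_inv) auto
      then show ?thesis unfolding R1_def by simp
    qed
    have sc: "seq_compact (cball (0::'a) R1)" by (intro compact_imp_seq_compact compact_cball)
    show "eventually (\<lambda>m. \<forall>v\<in>Ys (\<phi> m) \<inter> cball 0 R. \<exists>y\<in>g ` T. dist v y < e) sequentially"
    proof (rule ccontr)
      assume "\<not> eventually (\<lambda>m. \<forall>v\<in>Ys (\<phi> m) \<inter> cball 0 R. \<exists>y\<in>g ` T. dist v y < e) sequentially" (is "\<not> eventually ?P sequentially")
      from not_eventually_sequentiallyD[OF this] obtain k :: "nat \<Rightarrow> nat" where k: "strict_mono k" and nk: "\<forall>j. \<not> ?P (k j)" by blast
      have ex: "\<exists>u. u \<in> Xs (\<phi> (k j)) \<and> norm (F (\<phi> (k j)) u) \<le> R \<and> (\<forall>p\<in>T. e \<le> dist (F (\<phi> (k j)) u) (g p))" for j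
      proof -
        from spec[OF nk, of j] obtain v where v: "v \<in> Ys (\<phi> (k j))" "norm v \<le> R" "\<forall>y\<in>g ` T. \<not> dist v y < e"
          by auto
        from v(1) obtain u where "u \<in> Xs (\<phi> (k j))" "v = F (\<phi> (k j)) u" using FY by blast
        then show ?thesis using v by (intro exI[of _ u]) auto
      qed
      have "\<forall>j. \<exists>u. u \<in> Xs (\<phi> (k j)) \<and> norm (F (\<phi> (k j)) u) \<le> R \<and> (\<forall>p\<in>T. e \<le> dist (F (\<phi> (k j)) u) (g p))"
        using ex by blast
      from choice[OF this] obtain u where u: "\<And>j. u j \<in> Xs (\<phi> (k j))"
        "\<And>j. norm (F (\<phi> (k j)) (u j)) \<le> R" "\<And>j p. p \<in> T \<Longrightarrow> e \<le> dist (F (\<phi> (k j)) (u j)) (g p)"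
        by blast
      have uR: "norm (u j) \<le> R1" for j by (rule normb[OF normF[OF u(1)] u(2)])
      have "\<forall>j. u j \<in> cball 0 R1" using uR by simp
      from seq_compactE[OF sc this] obtain ps h where h: "strict_mono (h :: nat \<Rightarrow> nat)"
        "(u \<circ> h) \<longlonglongrightarrow> ps" by blast
      have khm: "strict_mono (\<phi> \<circ> (k \<circ> h))" using \<phi> k h by (simp add: strict_mono_o)
      have ev: "\<forall>e'>0. eventually (\<lambda>j. \<exists>b\<in>T. dist ((u \<circ> h) j) b < e') sequentially"
      proof (intro allI impI)
        fix e' :: real assume "e' > 0"
        from eventually_subseq[OF khm aw1[OF R1 this]]
        show "eventually (\<lambda>j. \<exists>b\<in>T. dist ((u \<circ> h) j) b < e') sequentially"
        proof eventually_elim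
          case (elim j)
          have "(u \<circ> h) j \<in> Xs ((\<phi> \<circ> (k \<circ> h)) j) \<inter> cball 0 R1" using u(1) uR by simp
          then show ?case using elim by blast
        qed
      qed
      obtain w where w: "\<forall>j. w j \<in> T" "(\<lambda>j. dist ((u \<circ> h) j) (w j)) \<longlonglongrightarrow> 0"
        using sel_seq[OF ev] T0 by blast
      have "w \<longlonglongrightarrow> ps"
        by (rule dist_transfer[OF _ h(2)]) (use w(2) in \<open>simp add: dist_commute\<close>)
      then have psT: "ps \<in> T" using clT w(1) closed_sequentially by blast
      have "(\<lambda>j. F (\<phi> ((k \<circ> h) j)) ((u \<circ> h) j)) \<longlonglongrightarrow> g ps"
        by (rule P[OF strict_mono_o[OF k h(1)] _ h(2) psT]) (simp add: u(1))
      then have "eventually (\<lambda>j. dist (F (\<phi> ((k \<circ> h) j)) ((u \<circ> h) j)) (g ps) < e) sequentially"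
        using e unfolding tendsto_iff by blast
      then obtain N where N: "\<And>j. j \<ge> N \<Longrightarrow> dist (F (\<phi> ((k \<circ> h) j)) ((u \<circ> h) j)) (g ps) < e"
        unfolding eventually_sequentially by blast
      with u(3)[OF psT, of "h N"] show False by (metis comp_apply le_refl not_less)
    qed
    show "eventually (\<lambda>m. \<forall>y\<in>g ` T \<inter> cball 0 R. \<exists>v\<in>Ys (\<phi> m). dist y v < e) sequentially"
    proof (rule ccontr)
      assume "\<not> eventually (\<lambda>m. \<forall>y\<in>g ` T \<inter> cball 0 R. \<exists>v\<in>Ys (\<phi> m). dist y v < e) sequentially" (is "\<not> eventually ?P sequentially")
      from not_eventually_sequentiallyD[OF this] obtain k :: "nat \<Rightarrow> nat" where k: "strict_mono k" and nk: "\<forall>j. \<not> ?P (k j)" by blast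
      have ex: "\<exists>p. p \<in> T \<and> norm (g p) \<le> R \<and> (\<forall>v\<in>Ys (\<phi> (k j)). e \<le> dist (g p) v)" for j
      proof -
        from spec[OF nk, of j] obtain p where y: "p \<in> T" "norm (g p) \<le> R" "\<forall>v\<in>Ys (\<phi> (k j)). \<not> dist (g p) v < e"
          by auto
        then show ?thesis by (auto simp: not_less)
      qed
      have "\<forall>j. \<exists>p. p \<in> T \<and> norm (g p) \<le> R \<and> (\<forall>v\<in>Ys (\<phi> (k j)). e \<le> dist (g p) v)"
        using ex by blast
      from choice[OF this] obtain pp where pp: "\<And>j. pp j \<in> T"
        "\<And>j. norm (g (pp j)) \<le> R" "\<And>j v. v \<in> Ys (\<phi> (k j)) \<Longrightarrow> e \<le> dist (g (pp j)) v"
        by blast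
      have pR: "norm (pp j) \<le> R1" for j by (rule normb[OF normg[OF pp(1)] pp(2)])
      have "\<forall>j. pp j \<in> cball 0 R1" using pR by simp
      from seq_compactE[OF sc this] obtain ps h where h: "strict_mono (h :: nat \<Rightarrow> nat)"
        "(pp \<circ> h) \<longlonglongrightarrow> ps" by blast
      have psT: "ps \<in> T" using clT pp(1) h(2) closed_sequentially[of T "pp \<circ> h"] by simp
      have khm: "strict_mono (\<phi> \<circ> (k \<circ> h))" using \<phi> k h by (simp add: strict_mono_o)
      have ev: "\<forall>e'>0. eventually (\<lambda>j. \<exists>b\<in>Xs (\<phi> (k (h j))). dist ((pp \<circ> h) j) b < e') sequentially"
      proof (intro allI impI)
        fix e' :: real assume "e' > 0"
        from eventually_subseq[OF khm aw2'[OF R1 this]]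
        show "eventually (\<lambda>j. \<exists>b\<in>Xs (\<phi> (k (h j))). dist ((pp \<circ> h) j) b < e') sequentially"
        proof eventually_elim
          case (elim j)
          have "(pp \<circ> h) j \<in> T \<inter> cball 0 R1" using pp(1) pR by simp
          then show ?case using elim by auto
        qed
      qed
      obtain w where w: "\<forall>j. w j \<in> Xs (\<phi> (k (h j)))" "(\<lambda>j. dist ((pp \<circ> h) j) (w j)) \<longlonglongrightarrow> 0"
        using sel_seq[OF ev] X0 by blast
      have "w \<longlonglongrightarrow> ps"
        by (rule dist_transfer[OF _ h(2)]) (use w(2) in \<open>simp add: dist_commute\<close>)
      have l1: "(\<lambda>j. F (\<phi> ((k \<circ> h) j)) (w j)) \<longlonglongrightarrow> g ps"
        by (rule P[OF strict_mono_o[OF k h(1)] _ \<open>w \<longlonglongrightarrow> ps\<close> psT]) (simp add: w(1))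
      have l2: "(\<lambda>j. g ((pp \<circ> h) j)) \<longlonglongrightarrow> g ps"
        by (rule gcont[OF _ psT h(2)]) (use pp(1) in simp)
      have "(\<lambda>j. dist (g ((pp \<circ> h) j)) (F (\<phi> ((k \<circ> h) j)) (w j))) \<longlonglongrightarrow> dist (g ps) (g ps)"
        by (rule tendsto_dist[OF l2 l1])
      then have "(\<lambda>j. dist (g ((pp \<circ> h) j)) (F (\<phi> ((k \<circ> h) j)) (w j))) \<longlonglongrightarrow> 0" by simp
      from order_tendstoD(2)[OF this e]
      obtain N where N: "\<And>j. j \<ge> N \<Longrightarrow> dist (g ((pp \<circ> h) j)) (F (\<phi> ((k \<circ> h) j)) (w j)) < e"
        unfolding eventually_sequentially by blast
      define j where "j = N"
      have j: "dist (g ((pp \<circ> h) j)) (F (\<phi> ((k \<circ> h) j)) (w j)) < e" using N[of N] by (simp add: j_def)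
      have "F (\<phi> ((k \<circ> h) j)) (w j) \<in> Ys (\<phi> (k (h j)))" using FY w(1) by auto
      from pp(3)[OF this] j show False by simp
    qed
  qed
  show ?thesis using \<phi> clg \<open>0 \<in> g ` T\<close> awY bh by blast
qed


theorem lemma9p1:
  fixes X :: "'a::euclidean_space set" and Y :: "'b::euclidean_space set"
    and f :: "'a \<Rightarrow> 'b" and t :: real
  assumes "t > 0" and "closed X" and "closed Y"
    and "bi_holder_homeo (1 / t) f X Y"
  shows "\<forall>x0\<in>X. \<forall>T\<in>Tan X x0. \<exists>T'\<in>Tan Y (f x0). \<exists>g :: 'a \<Rightarrow> 'b.
           bi_holder_homeo (1 / t) g T T'"
proof (intro ballI)
  fix x0 T assume x0: "x0 \<in> X" and TT: "T \<in> Tan X x0"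
  define \<beta> where "\<beta> = 1 / t"
  have b: "\<beta> > 0" using assms(1) by (simp add: \<beta>_def)
  from assms(4) obtain C where bij: "bij_betw f X Y" and C: "C \<ge> 1"
    and fb: "\<And>x y. x \<in> X \<Longrightarrow> y \<in> X \<Longrightarrow> dist x y powr \<beta> / C \<le> dist (f x) (f y) \<and> dist (f x) (f y) \<le> C * dist x y powr \<beta>"
    unfolding bi_holder_homeo_def \<beta>_def by blast
  have Cpos: "C > 0" using C by simp
  from TT obtain r where clT: "closed T" and T0: "0 \<in> T" and rpos: "\<And>j. r j > 0" and rdec: "decseq r"
    and r0: "r \<longlonglongrightarrow> 0" and awX: "attouch_wets (\<lambda>j. (\<lambda>y. (1 / r j) *\<^sub>R (y - x0)) ` X) T"
    unfolding Tan_def by blast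
  define s where "s j = r j powr \<beta>" for j
  have spos: "s j > 0" for j using rpos[of j] by (simp add: s_def)
  define Xs where "Xs j = (\<lambda>y. (1 / r j) *\<^sub>R (y - x0)) ` X" for j
  define Ys where "Ys j = (\<lambda>y. (1 / s j) *\<^sub>R (y - f x0)) ` Y" for j
  define F where "F j u = (1 / s j) *\<^sub>R (f (x0 + r j *\<^sub>R u) - f x0)" for j u
  have XsI: "x0 + r j *\<^sub>R u \<in> X" if "u \<in> Xs j" for j u
  proof -
    from that obtain y where "y \<in> X" "u = (1 / r j) *\<^sub>R (y - x0)" unfolding Xs_def by blast
    moreover have "x0 + r j *\<^sub>R ((1 / r j) *\<^sub>R (y - x0)) = y" using rpos[of j] by simp
    ultimately show ?thesis by simp
  qed
  have dX: "dist (x0 + r j *\<^sub>R u) (x0 + r j *\<^sub>R v) = r j * dist u v" for j u v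
  proof -
    have "dist (x0 + r j *\<^sub>R u) (x0 + r j *\<^sub>R v) = norm (r j *\<^sub>R (u - v))"
      by (simp add: dist_norm algebra_simps)
    also have "\<dots> = r j * dist u v" using rpos[of j] by (simp add: dist_norm)
    finally show ?thesis .
  qed
  have dY: "dist (F j u) (F j v) = dist (f (x0 + r j *\<^sub>R u)) (f (x0 + r j *\<^sub>R v)) / s j" for j u v
  proof -
    have "dist (F j u) (F j v) = norm ((1 / s j) *\<^sub>R (f (x0 + r j *\<^sub>R u) - f (x0 + r j *\<^sub>R v)))"
      unfolding F_def by (simp add: dist_norm algebra_simps)
    also have "\<dots> = dist (f (x0 + r j *\<^sub>R u)) (f (x0 + r j *\<^sub>R v)) / s j"
      using spos[of j] by (simp add: dist_norm)
    finally show ?thesis .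
  qed
  have pw: "dist (x0 + r j *\<^sub>R u) (x0 + r j *\<^sub>R v) powr \<beta> = s j * dist u v powr \<beta>" for j u v
    unfolding dX s_def using rpos[of j] by (simp add: powr_mult)
  have lo: "dist u v powr \<beta> / C \<le> dist (F j u) (F j v)" if "u \<in> Xs j" "v \<in> Xs j" for j u v
  proof -
    have "s j * dist u v powr \<beta> / C \<le> dist (f (x0 + r j *\<^sub>R u)) (f (x0 + r j *\<^sub>R v))"
      using fb[OF XsI[OF that(1)] XsI[OF that(2)]] pw[of j u v] by simp
    then show ?thesis unfolding dY using spos[of j] Cpos by (simp add: field_simps)
  qed
  have hi: "dist (F j u) (F j v) \<le> C * dist u v powr \<beta>" if "u \<in> Xs j" "v \<in> Xs j" for j u v
  proof -
    have "dist (f (x0 + r j *\<^sub>R u)) (f (x0 + r j *\<^sub>R v)) \<le> C * (s j * dist u v powr \<beta>)"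
      using fb[OF XsI[OF that(1)] XsI[OF that(2)]] pw[of j u v] by simp
    then show ?thesis unfolding dY using spos[of j] Cpos by (simp add: field_simps)
  qed
  have X0: "0 \<in> Xs j" for j unfolding Xs_def using x0 by (intro image_eqI[of _ _ x0]) auto
  have F0: "F j 0 = 0" for j by (simp add: F_def)
  have FY: "F j ` Xs j = Ys j" for j
  proof -
    have "F j ` Xs j = (\<lambda>y. (1 / s j) *\<^sub>R (y - f x0)) ` (f ` X)"
      unfolding Xs_def image_image F_def using rpos[of j] by simp
    also have "f ` X = Y" using bij by (simp add: bij_betw_def)
    finally show ?thesis unfolding Ys_def .
  qed
  have aw: "aw2 Xs T" using awX unfolding attouch_wets_aw2 Xs_def .
  from main_limit[OF aw clT T0 X0 F0 FY b C lo hi]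
  obtain \<phi> g where \<phi>: "strict_mono \<phi>" and clg: "closed (g ` T)" and g0: "0 \<in> g ` T"
    and awY: "aw2 (\<lambda>j. Ys (\<phi> j)) (g ` T)" and bh: "bi_holder_homeo \<beta> g T (g ` T)"
    by blast
  have "g ` T \<in> Tan Y (f x0)"
    unfolding Tan_def
  proof (intro CollectI conjI clg g0 exI[of _ "\<lambda>j. s (\<phi> j)"] allI)
    show "0 < s (\<phi> j)" for j by (rule spos)
    have "decseq s" unfolding decseq_def
    proof (intro allI impI)
      fix m n :: nat assume "m \<le> n"
      then have "r n \<le> r m" using rdec by (simp add: decseq_def)
      then show "s n \<le> s m" unfolding s_def using rpos[of n] b by (intro powr_mono2) auto
    qed
    then show "decseq (\<lambda>j. s (\<phi> j))" using \<phi>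
      by (auto simp: decseq_def strict_mono_less_eq)
    have "s \<longlonglongrightarrow> 0" unfolding s_def
      by (rule tendsto_zero_powrI[OF r0 tendsto_const]) (use rpos b in \<open>auto intro!: always_eventually less_imp_le\<close>)
    then show "(\<lambda>j. s (\<phi> j)) \<longlonglongrightarrow> 0" using LIMSEQ_subseq_LIMSEQ[OF _ \<phi>] by (simp add: o_def)
    show "attouch_wets (\<lambda>j. (\<lambda>y. (1 / s (\<phi> j)) *\<^sub>R (y - f x0)) ` Y) (g ` T)"
      using awY unfolding attouch_wets_aw2 Ys_def .
  qed
  then show "\<exists>T'\<in>Tan Y (f x0). \<exists>g :: 'a \<Rightarrow> 'b. bi_holder_homeo (1 / t) g T T'"
    using bh unfolding \<beta>_def by blast
qed

end
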